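(* Let $d\ge 2$ and $N\ge 2$ be integers, let $X=\{x^1,\dots,x^N\}\subseteq\mathbb{R}^d$, and let $C\subseteq\mathbb{R}^d$ be a proper closed convex cone. Then: (i) The indicator $\mathcal C_X$ induces a refinement of $\succeq_C$ on $\mathcal P(X)$: for all $A,B\subseteq X$ with $A\succeq_C B$ and $B\not\succeq_C A$, one has $\mathcal C_X(A)>\mathcal C_X(B)$. (ii) The indicator $R^{\triangledown}_C$ induces a weak refinement of $\succeq_C$ on $\mathcal P(X)$: for all $A,B\subseteq X$ with $A\succeq_C B$ and $B\not\succeq_C A$, one has $R^{\triangledown}_C(A)\ge R^{\triangledown}_C(B)$. (iii) In general $R^{\triangledown}_C$ does not induce a refinement of $\succeq_C$ on $\mathcal P(X)$: there exist $X$, $C$ (e.g. $d=2$, $C=\mathbb{R}^2_+$) and $A,B\subseteq X$ with $A\succeq_C B$, $B\not\succeq_C A$ and $R^{\triangledown}_C(A)=R^{\triangledown}_C(B)$.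
   Context: A proper closed convex cone $C\subseteq\mathbb{R}^d$ is a closed set with $sC=C$ for all $s\ge 0$, $C+C=C$, and $C\notin\{\varnothing,\mathbb{R}^d\}$; it induces the preorder $y\leq_C z$ iff $z-y\in C$ (also written $z\ge_C y$). The dual cone is $C^+=\{v\in\mathbb{R}^d\mid \forall z\in C: v^\top z\ge 0\}$. $\mathcal P(X)$ is the power set of $X$ (including $\varnothing$). For $A,B\subseteq\mathbb{R}^d$, $A\succeq_C B$ means: for every $b\in B$ there is $a\in A$ with $a\ge_C b$. Define $r_{X,C}(z)=\min_{v\in C^+}\#\{x\in X\mid v^\top x\le v^\top z\}$ for $z\in\mathbb{R}^d$ ($\#$ = cardinality), $R^{\triangledown}_C(A)=\sup_{a\in A} r_{X,C}(a)$ (with $\sup\varnothing=0$), and $\mathcal C_X(A)=\#\{x\in X\mid \exists a\in A: a\ge_C x\}$. An indicator $I:\mathcal P(X)\to\mathbb{R}$ induces the relation $A\succeq_I B:\Leftrightarrow I(A)\ge I(B)$; it is called a refinement of $\succeq_C$ if $A\succeq_C B$, $B\not\succeq_C A$ imply $I(A)>I(B)$, and a weak refinement if $A\succeq_C B$, $B\not\succeq_C A$ imply $I(A)\ge I(B)$. *)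

theory Defs
  imports "HOL-Analysis.Analysis"
begin

text \<open>Proper closed convex cone. The scaling condition is read as s C = C for s > 0
  (for s = 0 the literal condition would force C = {0}).\<close>

definition pccc :: "(real^'n) set \<Rightarrow> bool" where
  "pccc C \<longleftrightarrow> closed C \<and> (\<forall>s>0. (\<lambda>z. s *\<^sub>R z) ` C = C)
     \<and> {y + z | y z. y \<in> C \<and> z \<in> C} = C \<and> C \<noteq> {} \<and> C \<noteq> UNIV"

definition cone_le :: "(real^'n) set \<Rightarrow> real^'n \<Rightarrow> real^'n \<Rightarrow> bool" where
  "cone_le C y z \<longleftrightarrow> z - y \<in> C"

definition dual_cone :: "(real^'n) set \<Rightarrow> (real^'n) set" where
  "dual_cone C = {v. \<forall>z\<in>C. v \<bullet> z \<ge> 0}"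

definition set_dom :: "(real^'n) set \<Rightarrow> (real^'n) set \<Rightarrow> (real^'n) set \<Rightarrow> bool" where
  "set_dom C A B \<longleftrightarrow> (\<forall>b\<in>B. \<exists>a\<in>A. cone_le C b a)"

definition rank_XC :: "(real^'n) set \<Rightarrow> (real^'n) set \<Rightarrow> real^'n \<Rightarrow> nat" where
  "rank_XC X C z = Inf ((\<lambda>v. card {x\<in>X. v \<bullet> x \<le> v \<bullet> z}) ` dual_cone C)"

definition R_tri :: "(real^'n) set \<Rightarrow> (real^'n) set \<Rightarrow> (real^'n) set \<Rightarrow> nat" where
  "R_tri X C A = (if A = {} then 0 else Sup (rank_XC X C ` A))"

definition cover_XC :: "(real^'n) set \<Rightarrow> (real^'n) set \<Rightarrow> (real^'n) set \<Rightarrow> nat" where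
  "cover_XC X C A = card {x\<in>X. \<exists>a\<in>A. cone_le C x a}"

end

theory Submission
  imports Defs
begin

lemma pccc_zero: assumes "pccc C" shows "0 \<in> C"
proof -
  from assms obtain c where c: "c \<in> C" and cl: "closed C" and sc: "\<forall>s>0. (\<lambda>z. s *\<^sub>R z) ` C = C"
    unfolding pccc_def by blast
  have mem: "\<forall>n. inverse (real (Suc n)) *\<^sub>R c \<in> C"
  proof
    fix n
    have "inverse (real (Suc n)) > 0" by simp
    then have "(\<lambda>z. inverse (real (Suc n)) *\<^sub>R z) ` C = C" using sc by blast
    then show "inverse (real (Suc n)) *\<^sub>R c \<in> C" using c by blast
  qed
  have "(\<lambda>n. inverse (real (Suc n)) *\<^sub>R c) \<longlonglongrightarrow> 0 *\<^sub>R c"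
    by (intro tendsto_scaleR LIMSEQ_inverse_real_of_nat tendsto_const)
  then show ?thesis using closed_sequentially[OF cl] mem by fastforce
qed

lemma pccc_add: assumes "pccc C" "y \<in> C" "z \<in> C" shows "y + z \<in> C"
proof -
  have "{y + z | y z. y \<in> C \<and> z \<in> C} = C" using assms(1) unfolding pccc_def by blast
  then show ?thesis using assms by blast
qed

lemma cone_le_trans: assumes "pccc C" "cone_le C x y" "cone_le C y z" shows "cone_le C x z"
proof -
  have "(z - y) + (y - x) \<in> C" using pccc_add assms unfolding cone_le_def by blast
  then show ?thesis unfolding cone_le_def by simp
qed

lemma rank_mono:
  assumes "finite X" "cone_le C z w"
  shows "rank_XC X C z \<le> rank_XC X C w"
proof -
  have ne: "dual_cone C \<noteq> {}" unfolding dual_cone_def by (auto intro!: exI[of _ 0])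
  have "\<And>v. v \<in> dual_cone C \<Longrightarrow> card {x\<in>X. v \<bullet> x \<le> v \<bullet> z} \<le> card {x\<in>X. v \<bullet> x \<le> v \<bullet> w}"
  proof -
    fix v assume v: "v \<in> dual_cone C"
    have "v \<bullet> (w - z) \<ge> 0" using v assms(2) unfolding dual_cone_def cone_le_def by blast
    then have "v \<bullet> z \<le> v \<bullet> w" by (simp add: inner_diff_right)
    then show "card {x\<in>X. v \<bullet> x \<le> v \<bullet> z} \<le> card {x\<in>X. v \<bullet> x \<le> v \<bullet> w}"
      by (intro card_mono) (use assms(1) in auto)
  qed
  then show ?thesis unfolding rank_XC_def
    by (intro cInf_greatest) (use ne in \<open>auto intro!: cInf_lower2\<close>)
qed

lemma part1:
  assumes "finite X" "pccc C" "A \<subseteq> X" "B \<subseteq> X" "set_dom C A B" "\<not> set_dom C B A"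
  shows "cover_XC X C A > cover_XC X C B"
proof -
  let ?SA = "{x\<in>X. \<exists>a\<in>A. cone_le C x a}" and ?SB = "{x\<in>X. \<exists>a\<in>B. cone_le C x a}"
  have sub: "?SB \<subseteq> ?SA" using assms(5) cone_le_trans[OF assms(2)] unfolding set_dom_def by blast
  obtain a where a: "a \<in> A" "\<forall>b\<in>B. \<not> cone_le C a b" using assms(6) unfolding set_dom_def by blast
  have "cone_le C a a" using pccc_zero[OF assms(2)] unfolding cone_le_def by simp
  then have "a \<in> ?SA" "a \<notin> ?SB" using a assms(3) by auto
  then have "?SB \<subset> ?SA" using sub by blast
  then show ?thesis unfolding cover_XC_def
    by (intro psubset_card_mono) (use assms(1) in auto)
qed

lemma part2:
  assumes "finite X" "pccc C" "A \<subseteq> X" "B \<subseteq> X" "set_dom C A B"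
  shows "R_tri X C A \<ge> R_tri X C B"
proof (cases "B = {}")
  case True then show ?thesis unfolding R_tri_def by simp
next
  case False
  then have An: "A \<noteq> {}" using assms(5) unfolding set_dom_def by blast
  have fA: "finite A" "finite B" using assms finite_subset by auto
  have "\<forall>b\<in>B. rank_XC X C b \<le> Max (rank_XC X C ` A)"
  proof
    fix b assume "b \<in> B"
    then obtain a where "a \<in> A" "cone_le C b a" using assms(5) unfolding set_dom_def by blast
    then have "rank_XC X C b \<le> rank_XC X C a" using rank_mono assms(1) by blast
    also have "\<dots> \<le> Max (rank_XC X C ` A)" using \<open>a \<in> A\<close> fA by simp
    finally show "rank_XC X C b \<le> Max (rank_XC X C ` A)" .
  qed
  then show ?thesis unfolding R_tri_def using False An fA
    by (simp add: cSup_eq_Max)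
qed

definition pa :: "real^2" where "pa = axis 1 1 - axis 2 1"

lemma orth_dual: "axis i 1 \<in> dual_cone {z::real^2. \<forall>i. z $ i \<ge> 0}"
  unfolding dual_cone_def by (auto simp: inner_axis')

lemma rank_ge1: assumes "finite X" "z \<in> X" shows "1 \<le> rank_XC X C z"
proof -
  have ne: "dual_cone C \<noteq> {}" unfolding dual_cone_def by (auto intro!: exI[of _ 0])
  have "\<And>v. 1 \<le> card {x\<in>X. v \<bullet> x \<le> v \<bullet> z}"
  proof -
    fix v
    have "{x\<in>X. v \<bullet> x \<le> v \<bullet> z} \<noteq> {}" using assms by auto
    then show "1 \<le> card {x\<in>X. v \<bullet> x \<le> v \<bullet> z}" using assms(1)
      by (simp add: Suc_le_eq card_gt_0_iff)
  qed
  then show ?thesis unfolding rank_XC_def using ne by (intro cInf_greatest) auto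
qed

lemma rank_le1:
  assumes "finite X" "v \<in> dual_cone C" "card {x\<in>X. v \<bullet> x \<le> v \<bullet> z} \<le> 1"
  shows "rank_XC X C z \<le> 1"
  unfolding rank_XC_def using assms by (intro cInf_lower2) auto

lemma part3:
  "\<exists>(X :: (real^2) set) A B. finite X \<and> card X \<ge> 2 \<and>
            A \<subseteq> X \<and> B \<subseteq> X \<and>
            set_dom {z. \<forall>i. z $ i \<ge> 0} A B \<and> \<not> set_dom {z. \<forall>i. z $ i \<ge> 0} B A \<and>
            R_tri X {z. \<forall>i. z $ i \<ge> 0} A = R_tri X {z. \<forall>i. z $ i \<ge> 0} B"
proof -
  let ?C = "{z::real^2. \<forall>i. z $ i \<ge> 0}"
  let ?X = "{0, pa}"
  have p1: "pa $ 1 = 1" and p2: "pa $ 2 = -1" unfolding pa_def by (auto simp: axis_def)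
  have pne: "pa \<noteq> 0" using p1 by auto
  have cX: "card ?X = 2" using pne by simp
  have sd1: "set_dom ?C {0, pa} {0}" unfolding set_dom_def cone_le_def by auto
  have sd2: "\<not> set_dom ?C {0} {0, pa}" unfolding set_dom_def cone_le_def
    using p1 by (auto intro!: exI[of _ 1])
  have "{x\<in>?X. axis 1 1 \<bullet> x \<le> axis 1 1 \<bullet> 0} = {0}" using p1 by (auto simp: inner_axis')
  then have r0: "rank_XC ?X ?C 0 = 1"
    using rank_le1[of ?X "axis 1 1" ?C 0] rank_ge1[of ?X 0 ?C] orth_dual by fastforce
  have "{x\<in>?X. axis 2 1 \<bullet> x \<le> axis 2 1 \<bullet> pa} = {pa}" using p2 by (auto simp: inner_axis')
  then have ra: "rank_XC ?X ?C pa = 1"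
    using rank_le1[of ?X "axis 2 1" ?C pa] rank_ge1[of ?X pa ?C] orth_dual by fastforce
  have "R_tri ?X ?C {0, pa} = R_tri ?X ?C {0}" unfolding R_tri_def using r0 ra by simp
  then show ?thesis using cX sd1 sd2 by (intro exI[of _ ?X] exI[of _ "{0, pa}"] exI[of _ "{0}"]) auto
qed

theorem proposition5p3:
  shows "(\<forall>(X :: (real^'n) set) C. CARD('n) \<ge> 2 \<longrightarrow> finite X \<longrightarrow> card X \<ge> 2 \<longrightarrow> pccc C \<longrightarrow>
            (\<forall>A B. A \<subseteq> X \<longrightarrow> B \<subseteq> X \<longrightarrow> set_dom C A B \<longrightarrow> \<not> set_dom C B A \<longrightarrow>
               cover_XC X C A > cover_XC X C B))
       \<and> (\<forall>(X :: (real^'n) set) C. CARD('n) \<ge> 2 \<longrightarrow> finite X \<longrightarrow> card X \<ge> 2 \<longrightarrow> pccc C \<longrightarrow>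
            (\<forall>A B. A \<subseteq> X \<longrightarrow> B \<subseteq> X \<longrightarrow> set_dom C A B \<longrightarrow> \<not> set_dom C B A \<longrightarrow>
               R_tri X C A \<ge> R_tri X C B))
       \<and> (\<exists>(X :: (real^2) set) A B. finite X \<and> card X \<ge> 2 \<and>
            A \<subseteq> X \<and> B \<subseteq> X \<and>
            set_dom {z. \<forall>i. z $ i \<ge> 0} A B \<and> \<not> set_dom {z. \<forall>i. z $ i \<ge> 0} B A \<and>
            R_tri X {z. \<forall>i. z $ i \<ge> 0} A = R_tri X {z. \<forall>i. z $ i \<ge> 0} B)"
  apply (intro conjI allI impI)
    apply (rule part1; assumption)
   apply (rule part2; assumption)
  apply (rule part3)
  done

end
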